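(* Let $\mu$ be a probability measure on $\mathbb{R}^d$ with density $p=f/Z_f$ and $\nu$ a probability measure with density $q=g/Z_g$, where $f,g:\mathbb{R}^d\to(0,\infty)$ are integrable with $Z_f=\int f$, $Z_g=\int g$. Fix $c>0$ and set $\alpha(x)=\min\{1,\frac{g(x)}{cf(x)}\}$ $\big(=\min\{1,\frac{q(x)}{\tilde c p(x)}\}$ with $\tilde c=cZ_f/Z_g\big)$. Let $X,X'\sim\mu$ and $U\sim\mathrm{Unif}[0,1]$ be independent, and define $\tilde X=X$ if $U\le\alpha(X)$ and $\tilde X=X'$ otherwise. Let $\tilde\mu$ be the law of $\tilde X$. Then: (i) $\tilde\mu$ has density $\tilde p(x)=p(x)\big(\alpha(x)+1-\mathbb{E}[\alpha(X)]\big)$; in particular $\tilde p=\tilde f/Z_{\tilde f}$ with $\tilde f(x)=f(x)(\alpha(x)+1-\mathbb{E}[\alpha(X)])$ and $Z_{\tilde f}=Z_f$; (ii) $\mathrm{KL}(\tilde\mu,\nu)\le\mathrm{KL}(\mu,\nu)$.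
   Context: $\mathrm{KL}(\mu,\nu)=\int p(x)\log\frac{p(x)}{q(x)}\,dx$ for measures with densities $p,q$ (and $+\infty$ otherwise). *)

theory Defs
  imports "HOL-Probability.Probability"
begin

definition has_lebesgue_density :: "'a::euclidean_space measure \<Rightarrow> ('a \<Rightarrow> real) \<Rightarrow> bool" where
  "has_lebesgue_density M p \<longleftrightarrow>
     p \<in> borel_measurable lborel \<and> (\<forall>x. 0 \<le> p x) \<and> M = density lborel (\<lambda>x. ennreal (p x))"

text \<open>The extended-valued integral of p log(p/q), with the conventions
  0 log(0/q) = 0 and p log(p/0) = +infinity for p > 0.\<close>
definition KL_dens :: "('a::euclidean_space \<Rightarrow> real) \<Rightarrow> ('a \<Rightarrow> real) \<Rightarrow> ereal" where
  "KL_dens p q =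
     (if emeasure lborel {x. 0 < p x \<and> q x = 0} \<noteq> 0 then \<infinity>
      else enn2ereal (\<integral>\<^sup>+ x. ennreal (p x * ln (p x / q x)) \<partial>lborel)
         - enn2ereal (\<integral>\<^sup>+ x. ennreal (- (p x * ln (p x / q x))) \<partial>lborel))"

definition KL :: "'a::euclidean_space measure \<Rightarrow> 'a measure \<Rightarrow> ereal" where
  "KL \<mu> \<nu> =
     (if (\<exists>p. has_lebesgue_density \<mu> p) \<and> (\<exists>q. has_lebesgue_density \<nu> q)
      then KL_dens (SOME p. has_lebesgue_density \<mu> p) (SOME q. has_lebesgue_density \<nu> q)
      else \<infinity>)"

end

theory Submission
  imports Defs
begin


lemma phi_le:
  fixes a b :: real
  assumes b0: "0 < b" and b1: "b \<le> 1" and a0: "0 < a" and a1: "a \<le> 1"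
  shows "(a + 1 - b) * ln (a + 1 - b) - (a - b) * ln a \<le> (1 - ln b) * (a - b)"
proof -
  define s where "s = 1 - b"
  have s0: "0 \<le> s" using b1 by (simp add: s_def)
  define \<psi> where "\<psi> = (\<lambda>t. (t + s) * ln (t + s) - (t + s - 1) * ln t - (1 - ln b) * (t - b))"
  have D: "DERIV \<psi> t :> ln (t + s) - ln t + b / t - 1 + ln b" if "0 < t" for t
  proof -
    have "DERIV \<psi> t :> (1 * ln (t + s) + (t + s) * (1 / (t + s)) - (1 * ln t + (t + s - 1) * (1 / t)) - (1 - ln b) * 1)"
      unfolding \<psi>_def using that s0
      by (intro derivative_eq_intros) auto
    moreover have "(1 * ln (t + s) + (t + s) * (1 / (t + s)) - (1 * ln t + (t + s - 1) * (1 / t)) - (1 - ln b) * 1)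
        = ln (t + s) - ln t + b / t - 1 + ln b"
      using that s0 by (simp add: s_def field_simps)
    ultimately show ?thesis by (rule DERIV_cong)
  qed
  have pb: "\<psi> b = 0" unfolding \<psi>_def s_def by simp
  have key: "\<psi> a \<le> 0"
  proof (cases "a \<le> b")
    case True
    have "\<psi> a \<le> \<psi> b"
    proof (rule DERIV_nonneg_imp_nondecreasing[OF True])
      fix t assume t: "a \<le> t" "t \<le> b"
      have t0: "0 < t" using t a0 by simp
      have "s / b \<le> s / t" using t0 t s0 by (intro divide_left_mono) auto
      then have "(b + s) / b \<le> (t + s) / t" using t0 b0 by (simp add: add_divide_distrib)
      then have "ln ((b + s) / b) \<le> ln ((t + s) / t)"
        using t0 s0 b0 by (subst ln_le_cancel_iff) auto
      moreover have "1 \<le> b / t" using t t0 by simp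
      moreover have "ln ((b + s) / b) = - ln b" using b0 by (simp add: s_def ln_div)
      moreover have "ln ((t + s) / t) = ln (t + s) - ln t" using t0 s0 by (simp add: ln_div)
      ultimately have "0 \<le> ln (t + s) - ln t + b / t - 1 + ln b" by linarith
      then show "\<exists>y. DERIV \<psi> t :> y \<and> 0 \<le> y" using D[OF t0] by blast
    qed
    then show ?thesis using pb by simp
  next
    case False
    then have ba: "b \<le> a" by simp
    have "\<psi> b \<ge> \<psi> a"
    proof (rule DERIV_nonpos_imp_nonincreasing[OF ba])
      fix t assume t: "b \<le> t" "t \<le> a"
      have t0: "0 < t" using t b0 by simp
      have "s / t \<le> s / b" using t0 t s0 b0 by (intro divide_left_mono) auto
      then have "(t + s) / t \<le> (b + s) / b" using t0 b0 by (simp add: add_divide_distrib)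
      then have "ln ((t + s) / t) \<le> ln ((b + s) / b)"
        using t0 s0 b0 by (subst ln_le_cancel_iff) auto
      moreover have "b / t \<le> 1" using t t0 by simp
      moreover have "ln ((b + s) / b) = - ln b" using b0 by (simp add: s_def ln_div)
      moreover have "ln ((t + s) / t) = ln (t + s) - ln t" using t0 s0 by (simp add: ln_div)
      ultimately have "ln (t + s) - ln t + b / t - 1 + ln b \<le> 0" by linarith
      then show "\<exists>y. DERIV \<psi> t :> y \<and> y \<le> 0" using D[OF t0] by blast
    qed
    then show ?thesis using pb by simp
  qed
  then show ?thesis unfolding \<psi>_def s_def by (simp add: algebra_simps)
qed

lemma pointwise_KL:
  fixes P Q cc b :: real
  assumes P0: "0 < P" and Q0: "0 < Q" and cc0: "0 < cc" and b0: "0 < b" and b1: "b \<le> 1"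
  defines "a \<equiv> min 1 (Q / (cc * P))"
  shows "P * (a + 1 - b) * ln (P * (a + 1 - b) / Q)
     \<le> P * ln (P / Q) + P * (a - b) * (1 - ln b - ln cc)"
proof -
  have a0: "0 < a" and a1: "a \<le> 1" unfolding a_def using P0 Q0 cc0 by auto
  define h where "h = a + 1 - b"
  have h0: "0 < h" using a0 b1 by (simp add: h_def)
  define L where "L = ln (P / Q)"
  have c1: "(a - b) * L \<le> (a - b) * (- ln cc - ln a)"
  proof (cases "a < 1")
    case True
    then have "a = Q / (cc * P)" unfolding a_def by simp
    then have "ln a = ln Q - ln cc - ln P" using P0 Q0 cc0 by (simp add: ln_div ln_mult)
    then have "L = - ln cc - ln a" unfolding L_def using P0 Q0 by (simp add: ln_div)
    then show ?thesis by simp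
  next
    case False
    then have "a = 1" using a1 by simp
    then have "1 \<le> Q / (cc * P)" unfolding a_def by simp
    then have "cc * P \<le> Q" using P0 cc0 by (simp add: field_simps)
    then have "ln (cc * P) \<le> ln Q" using P0 cc0 Q0 by simp
    then have "L \<le> - ln cc" unfolding L_def using P0 Q0 cc0 by (simp add: ln_div ln_mult)
    moreover have "0 \<le> a - b" using \<open>a = 1\<close> b1 by simp
    ultimately have "(a - b) * L \<le> (a - b) * (- ln cc)" by (rule mult_left_mono)
    then show ?thesis using \<open>a = 1\<close> by simp
  qed
  have c2: "h * ln h - (a - b) * ln a \<le> (1 - ln b) * (a - b)"
    unfolding h_def by (rule phi_le[OF b0 b1 a0 a1])
  have "P * h * ln (P * h / Q) = P * (h * ln h + h * L)"
    using P0 Q0 h0 by (simp add: L_def ln_div ln_mult algebra_simps)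
  also have "h * ln h + h * L = L + (h * ln h + (a - b) * L)" by (simp add: h_def algebra_simps)
  also have "P * (L + (h * ln h + (a - b) * L)) \<le> P * (L + (a - b) * (1 - ln b - ln cc))"
  proof -
    have "h * ln h + (a - b) * L \<le> (a - b) * (1 - ln b - ln cc)" using c1 c2 by (simp add: algebra_simps)
    then show ?thesis using P0 by simp
  qed
  finally show ?thesis unfolding h_def L_def by (simp add: algebra_simps)
qed


lemma mix_density:
  fixes p \<alpha> :: "'a::euclidean_space \<Rightarrow> real"
  assumes pm[measurable]: "p \<in> borel_measurable lborel" and p0: "\<And>x. 0 \<le> p x"
    and ps: "prob_space (density lborel (\<lambda>x. ennreal (p x)))"
    and am[measurable]: "\<alpha> \<in> borel_measurable borel" and a0: "\<And>x. 0 \<le> \<alpha> x" and a1: "\<And>x. \<alpha> x \<le> 1"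
  defines "M \<equiv> density lborel (\<lambda>x. ennreal (p x))"
  shows "distr ((M \<Otimes>\<^sub>M M) \<Otimes>\<^sub>M uniform_measure lborel {0..(1::real)}) borel
                   (\<lambda>((x, x'), u). if u \<le> \<alpha> x then x else x')
       = density lborel (\<lambda>x. ennreal (p x * (\<alpha> x + 1 - (\<integral>y. \<alpha> y \<partial>M))))"
proof -
  let ?U = "uniform_measure lborel {0..(1::real)}"
  let ?T = "(\<lambda>((x, x'), u). if u \<le> \<alpha> x then x else x') :: ('a \<times> 'a) \<times> real \<Rightarrow> 'a"
  interpret M: prob_space M using ps unfolding M_def .
  interpret U: prob_space ?U by (rule prob_space_uniform_measure) auto
  have sM[measurable_cong]: "sets M = sets borel" unfolding M_def by simp
  have Tm[measurable]: "?T \<in> measurable ((M \<Otimes>\<^sub>M M) \<Otimes>\<^sub>M ?U) borel"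
  proof -
    have e: "?T = (\<lambda>\<omega>. if snd \<omega> \<le> \<alpha> (fst (fst \<omega>)) then fst (fst \<omega>) else snd (fst \<omega>))"
      by (auto simp: fun_eq_iff split: prod.splits)
    show ?thesis unfolding e by measurable
  qed
  show ?thesis
  proof (rule measure_eqI)
    fix A assume "A \<in> sets (distr ((M \<Otimes>\<^sub>M M) \<Otimes>\<^sub>M ?U) borel ?T)"
    then have A[measurable]: "A \<in> sets borel" by simp
    let ?D = "distr ((M \<Otimes>\<^sub>M M) \<Otimes>\<^sub>M ?U) borel ?T"
    define m where "m = measure M A"
    define \<beta> where "\<beta> = (\<integral>y. \<alpha> y \<partial>M)"
    have AM[measurable]: "A \<in> sets M" using A sM by simp
    have eA: "emeasure M A = ennreal m" unfolding m_def by (simp add: M.emeasure_eq_measure)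
    have Ua: "emeasure ?U {..a} = ennreal a" if "0 \<le> a" "a \<le> 1" for a
    proof -
      have "{0..1} \<inter> {..a} = {0..a}" using that by auto
      then show ?thesis using that by (simp add: emeasure_uniform_measure divide_ennreal_def)
    qed
    have Ub: "emeasure ?U {a<..} = ennreal (1 - a)" if "0 \<le> a" "a \<le> 1" for a
    proof -
      have "{0..1} \<inter> {a<..} = {a<..1}" using that by auto
      then show ?thesis using that by (simp add: emeasure_uniform_measure divide_ennreal_def)
    qed
    have inner: "(\<integral>\<^sup>+ u. indicator A (if u \<le> \<alpha> x then x else x') \<partial>?U)
        = ennreal (indicator A x * \<alpha> x + indicator A x' * (1 - \<alpha> x))" for x x'
    proof -
      have "(\<integral>\<^sup>+ u. indicator A (if u \<le> \<alpha> x then x else x') \<partial>?U)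
         = (\<integral>\<^sup>+ u. ennreal (indicator A x) * indicator {..\<alpha> x} u + ennreal (indicator A x') * indicator {\<alpha> x<..} u \<partial>?U)"
        by (intro nn_integral_cong) (auto split: split_indicator)
      also have "\<dots> = ennreal (indicator A x) * emeasure ?U {..\<alpha> x} + ennreal (indicator A x') * emeasure ?U {\<alpha> x<..}"
        by (subst nn_integral_add) (auto simp: nn_integral_cmult_indicator)
      also have "\<dots> = ennreal (indicator A x * \<alpha> x + indicator A x' * (1 - \<alpha> x))"
        using a0[of x] a1[of x] by (simp only: Ua[OF a0 a1] Ub[OF a0 a1]) (simp add: ennreal_mult[symmetric] ennreal_plus[symmetric] del: ennreal_plus)
      finally show ?thesis .
    qed
    have inner2: "(\<integral>\<^sup>+ x'. ennreal (indicator A x * \<alpha> x + indicator A x' * (1 - \<alpha> x)) \<partial>M)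
        = ennreal (indicator A x * \<alpha> x + (1 - \<alpha> x) * m)" for x
    proof -
      have "(\<integral>\<^sup>+ x'. ennreal (indicator A x * \<alpha> x + indicator A x' * (1 - \<alpha> x)) \<partial>M)
         = (\<integral>\<^sup>+ x'. ennreal (indicator A x * \<alpha> x) + ennreal (1 - \<alpha> x) * indicator A x' \<partial>M)"
        using a0[of x] a1[of x] by (intro nn_integral_cong) (auto split: split_indicator)
      also have "\<dots> = ennreal (indicator A x * \<alpha> x) + ennreal (1 - \<alpha> x) * ennreal m"
        by (subst nn_integral_add) (auto simp: nn_integral_cmult_indicator eA M.emeasure_space_1)
      also have "\<dots> = ennreal (indicator A x * \<alpha> x + (1 - \<alpha> x) * m)"
        using a0[of x] a1[of x] measure_nonneg[of M A] unfolding m_def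
        by (simp add: ennreal_mult[symmetric] ennreal_plus[symmetric] del: ennreal_plus)
      finally show ?thesis .
    qed
    have iA: "integrable M (indicator A :: _ \<Rightarrow> real)"
      by (rule M.integrable_const_bound[where B=1]) (auto split: split_indicator)
    have ia: "integrable M \<alpha>"
      by (rule M.integrable_const_bound[where B=1]) (use a0 a1 in \<open>auto simp: abs_le_iff\<close>)
    have iaA: "integrable M (\<lambda>x. indicator A x * \<alpha> x)"
      by (rule M.integrable_const_bound[where B=1]) (use a0 a1 in \<open>auto simp: abs_le_iff split: split_indicator\<close>)
    have hb: "\<beta> \<le> 1"
    proof -
      have "\<beta> \<le> (\<integral>y. 1 \<partial>M)" unfolding \<beta>_def using a1 by (intro integral_mono ia) auto
      then show ?thesis by (simp add: M.prob_space)
    qed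
    have hb0: "0 \<le> \<beta>" unfolding \<beta>_def using a0 by (simp add: Bochner_Integration.integral_nonneg)
    have i2: "integrable M (\<lambda>x. (\<alpha> x + 1 - \<beta>) * indicator A x)"
      apply (rule M.integrable_const_bound[where B=2], rule AE_I2)
      subgoal for x using a0[of x] a1[of x] hb hb0 by (auto simp: abs_le_iff split: split_indicator)
      by simp
    have m0: "0 \<le> m" unfolding m_def by simp
    have itot: "integrable M (\<lambda>x. indicator A x * \<alpha> x + (1 - \<alpha> x) * m)"
      by (intro Bochner_Integration.integrable_add iaA integrable_mult_left Bochner_Integration.integrable_diff ia) simp
    have mz: "(\<lambda>z. ennreal (indicator A (fst z) * \<alpha> (fst z) + indicator A (snd z) * (1 - \<alpha> (fst z)))) \<in> borel_measurable (M \<Otimes>\<^sub>M M)"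
      by measurable
    have "emeasure ?D A = (\<integral>\<^sup>+ x. indicator A x \<partial>?D)" using A by simp
    also have "\<dots> = (\<integral>\<^sup>+ \<omega>. indicator A (?T \<omega>) \<partial>((M \<Otimes>\<^sub>M M) \<Otimes>\<^sub>M ?U))"
      by (rule nn_integral_distr[OF Tm]) simp
    also have "\<dots> = (\<integral>\<^sup>+ z. \<integral>\<^sup>+ u. indicator A (?T (z, u)) \<partial>?U \<partial>(M \<Otimes>\<^sub>M M))"
      by (rule U.nn_integral_fst[symmetric]) measurable
    also have "\<dots> = (\<integral>\<^sup>+ z. ennreal (indicator A (fst z) * \<alpha> (fst z) + indicator A (snd z) * (1 - \<alpha> (fst z))) \<partial>(M \<Otimes>\<^sub>M M))"
      by (intro nn_integral_cong) (auto simp: inner)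
    also have "\<dots> = (\<integral>\<^sup>+ x. \<integral>\<^sup>+ x'. ennreal (indicator A x * \<alpha> x + indicator A x' * (1 - \<alpha> x)) \<partial>M \<partial>M)"
      by (subst M.nn_integral_fst[symmetric]) (simp_all add: mz)
    also have "\<dots> = (\<integral>\<^sup>+ x. ennreal (indicator A x * \<alpha> x + (1 - \<alpha> x) * m) \<partial>M)"
      by (simp add: inner2)
    also have "\<dots> = ennreal (\<integral> x. indicator A x * \<alpha> x + (1 - \<alpha> x) * m \<partial>M)"
      by (rule nn_integral_eq_integral[OF itot]) (use a0 a1 m0 in \<open>auto intro!: add_nonneg_nonneg mult_nonneg_nonneg\<close>)
    also have "(\<integral> x. indicator A x * \<alpha> x + (1 - \<alpha> x) * m \<partial>M) = (\<integral> x. indicator A x * \<alpha> x \<partial>M) + m - \<beta> * m"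
      using iaA ia unfolding \<beta>_def by (simp add: algebra_simps prob_space.prob_space M.prob_space)
    also have "\<dots> = (\<integral> x. (\<alpha> x + 1 - \<beta>) * indicator A x \<partial>M)"
      using iaA iA unfolding m_def by (simp add: algebra_simps)
    also have "ennreal \<dots> = (\<integral>\<^sup>+ x. ennreal ((\<alpha> x + 1 - \<beta>) * indicator A x) \<partial>M)"
      by (rule nn_integral_eq_integral[symmetric, OF i2])
         (rule AE_I2, use a0 hb in \<open>auto intro!: mult_nonneg_nonneg add_nonneg_nonneg order_trans[OF hb] add_increasing\<close>)
    also have "\<dots> = emeasure (density lborel (\<lambda>x. ennreal (p x * (\<alpha> x + 1 - \<beta>)))) A"
      unfolding M_def using A
      by (subst nn_integral_density; simp add: emeasure_density)
         (intro nn_integral_cong, use a0 hb p0 in \<open>auto simp: ennreal_mult'[symmetric] split: split_indicator\<close>)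
    finally show "emeasure ?D A = emeasure (density lborel (\<lambda>x. ennreal (p x * (\<alpha> x + 1 - (\<integral>y. \<alpha> y \<partial>M))))) A"
      unfolding \<beta>_def .
  qed simp
qed


lemma int_ineq:
  fixes F G H :: "'a \<Rightarrow> real"
  assumes Fm[measurable]: "F \<in> borel_measurable M" and Gm[measurable]: "G \<in> borel_measurable M"
    and Hi: "integrable M H" and H0: "integral\<^sup>L M H = 0"
    and le: "\<And>x. F x \<le> G x + H x"
    and Gneg: "(\<integral>\<^sup>+x. ennreal (- G x) \<partial>M) < \<infinity>"
  shows "enn2ereal (\<integral>\<^sup>+x. ennreal (F x) \<partial>M) - enn2ereal (\<integral>\<^sup>+x. ennreal (- F x) \<partial>M)
       \<le> enn2ereal (\<integral>\<^sup>+x. ennreal (G x) \<partial>M) - enn2ereal (\<integral>\<^sup>+x. ennreal (- G x) \<partial>M)"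
proof (cases "(\<integral>\<^sup>+x. ennreal (G x) \<partial>M) = \<infinity>")
  case True
  obtain r where r: "(\<integral>\<^sup>+x. ennreal (- G x) \<partial>M) = ennreal r" "0 \<le> r"
    using Gneg by (cases "(\<integral>\<^sup>+x. ennreal (- G x) \<partial>M)" rule: ennreal_cases) auto
  have e1: "enn2ereal (\<integral>\<^sup>+x. ennreal (G x) \<partial>M) = \<infinity>" using True by simp
  have e2: "enn2ereal (\<integral>\<^sup>+x. ennreal (- G x) \<partial>M) = ereal r" using r by simp
  show ?thesis unfolding e1 e2 by simp
next
  case False
  have Gi: "integrable M G" unfolding real_integrable_def using False Gneg by auto
  have Ki: "integrable M (\<lambda>x. G x + H x)" using Gi Hi by simp
  obtain r1 q1 where K: "0 \<le> r1" "0 \<le> q1" "(\<integral>\<^sup>+x. ennreal (G x + H x)\<partial>M) = ennreal r1"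
    "(\<integral>\<^sup>+x. ennreal (-(G x + H x))\<partial>M) = ennreal q1" "integral\<^sup>L M (\<lambda>x. G x + H x) = r1 - q1"
    by (rule integrableE[OF Ki])
  obtain r2 q2 where G: "0 \<le> r2" "0 \<le> q2" "(\<integral>\<^sup>+x. ennreal (G x)\<partial>M) = ennreal r2"
    "(\<integral>\<^sup>+x. ennreal (- G x)\<partial>M) = ennreal q2" "integral\<^sup>L M G = r2 - q2"
    by (rule integrableE[OF Gi])
  have "integral\<^sup>L M (\<lambda>x. G x + H x) = integral\<^sup>L M G" using Gi Hi H0 by simp
  then have eq: "r1 - q1 = r2 - q2" using K G by simp
  have m1: "(\<integral>\<^sup>+x. ennreal (F x) \<partial>M) \<le> (\<integral>\<^sup>+x. ennreal (G x + H x) \<partial>M)"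
    by (intro nn_integral_mono ennreal_leI le)
  have m2: "(\<integral>\<^sup>+x. ennreal (-(G x + H x)) \<partial>M) \<le> (\<integral>\<^sup>+x. ennreal (- F x) \<partial>M)"
    by (intro nn_integral_mono ennreal_leI) (use le in \<open>auto simp: le_minus_iff add.commute\<close>)
  have "enn2ereal (\<integral>\<^sup>+x. ennreal (F x) \<partial>M) - enn2ereal (\<integral>\<^sup>+x. ennreal (- F x) \<partial>M)
      \<le> enn2ereal (\<integral>\<^sup>+x. ennreal (G x + H x) \<partial>M) - enn2ereal (\<integral>\<^sup>+x. ennreal (-(G x + H x)) \<partial>M)"
    by (intro ereal_minus_mono) (use m1 m2 in \<open>simp_all add: less_eq_ennreal.rep_eq[symmetric]\<close>)
  also have "\<dots> = ereal (r1 - q1)" using K by simp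
  also have "\<dots> = enn2ereal (\<integral>\<^sup>+x. ennreal (G x) \<partial>M) - enn2ereal (\<integral>\<^sup>+x. ennreal (- G x) \<partial>M)"
    using G eq by simp
  finally show ?thesis .
qed



lemma dens_ae:
  fixes p p' :: "'a::euclidean_space \<Rightarrow> real"
  assumes "has_lebesgue_density (density lborel (\<lambda>x. ennreal (p x))) p'"
    and pm: "p \<in> borel_measurable lborel" and p0: "\<And>x. 0 \<le> p x"
  shows "AE x in lborel. p' x = p x"
proof -
  have p'm: "p' \<in> borel_measurable lborel" and p'0: "\<And>x. 0 \<le> p' x"
    and eq: "density lborel (\<lambda>x. ennreal (p x)) = density lborel (\<lambda>x. ennreal (p' x))"
    using assms(1) unfolding has_lebesgue_density_def by auto
  have "AE x in lborel. ennreal (p x) = ennreal (p' x)"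
    using eq by (subst (asm) sigma_finite_measure.density_unique_iff[OF sigma_finite_lborel]) (use pm p'm in auto)
  then show ?thesis by eventually_elim (use p0 p'0 in auto)
qed

lemma KL_density_eq:
  fixes p q :: "'a::euclidean_space \<Rightarrow> real"
  assumes pm: "p \<in> borel_measurable lborel" and p0: "\<And>x. 0 \<le> p x"
    and qm: "q \<in> borel_measurable lborel" and q0: "\<And>x. 0 < q x"
  shows "KL (density lborel (\<lambda>x. ennreal (p x))) (density lborel (\<lambda>x. ennreal (q x)))
       = enn2ereal (\<integral>\<^sup>+x. ennreal (p x * ln (p x / q x)) \<partial>lborel)
         - enn2ereal (\<integral>\<^sup>+x. ennreal (- (p x * ln (p x / q x))) \<partial>lborel)"
proof -
  let ?\<mu> = "density lborel (\<lambda>x. ennreal (p x))" and ?\<nu> = "density lborel (\<lambda>x. ennreal (q x))"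
  have hp: "has_lebesgue_density ?\<mu> p" unfolding has_lebesgue_density_def using pm p0 by auto
  have hq: "has_lebesgue_density ?\<nu> q" unfolding has_lebesgue_density_def using qm q0 less_imp_le by auto
  define p' where "p' = (SOME p. has_lebesgue_density ?\<mu> p)"
  define q' where "q' = (SOME q. has_lebesgue_density ?\<nu> q)"
  have hp': "has_lebesgue_density ?\<mu> p'" unfolding p'_def using hp by (metis someI_ex)
  have hq': "has_lebesgue_density ?\<nu> q'" unfolding q'_def using hq by (metis someI_ex)
  have ap: "AE x in lborel. p' x = p x" by (rule dens_ae[OF hp' pm p0])
  have aq: "AE x in lborel. q' x = q x" by (rule dens_ae[OF hq' qm]) (use q0 less_imp_le in auto)
  have KLe: "KL ?\<mu> ?\<nu> = KL_dens p' q'" unfolding KL_def p'_def q'_def using hp hq by auto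
  have "emeasure lborel {x \<in> space lborel. 0 < p' x \<and> q' x = 0} = 0"
    by (rule emeasure_eq_0_AE) (use aq in \<open>eventually_elim\<close>, metis q0 less_irrefl)
  then have z: "emeasure lborel {x. 0 < p' x \<and> q' x = 0} = 0" by simp
  have i1: "(\<integral>\<^sup>+x. ennreal (p' x * ln (p' x / q' x)) \<partial>lborel) = (\<integral>\<^sup>+x. ennreal (p x * ln (p x / q x)) \<partial>lborel)"
    by (rule nn_integral_cong_AE) (use ap aq in \<open>auto elim!: eventually_mono eventually_rev_mp\<close>)
  have i2: "(\<integral>\<^sup>+x. ennreal (- (p' x * ln (p' x / q' x))) \<partial>lborel) = (\<integral>\<^sup>+x. ennreal (- (p x * ln (p x / q x))) \<partial>lborel)"
    by (rule nn_integral_cong_AE) (use ap aq in \<open>auto elim!: eventually_mono eventually_rev_mp\<close>)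
  show ?thesis unfolding KLe KL_dens_def using z i1 i2 by simp
qed


theorem proposition1:
  fixes f g :: "'a::euclidean_space \<Rightarrow> real" and c :: real
  assumes f_pos: "\<And>x. 0 < f x" and g_pos: "\<And>x. 0 < g x"
    and f_int: "integrable lborel f" and g_int: "integrable lborel g"
    and c_pos: "0 < c"
  defines "Zf \<equiv> integral\<^sup>L lborel f"
    and "Zg \<equiv> integral\<^sup>L lborel g"
  defines "p \<equiv> (\<lambda>x. f x / Zf)"
    and "q \<equiv> (\<lambda>x. g x / Zg)"
  defines "\<mu> \<equiv> density lborel (\<lambda>x. ennreal (p x))"
    and "\<nu> \<equiv> density lborel (\<lambda>x. ennreal (q x))"
  defines "\<alpha> \<equiv> (\<lambda>x. min 1 (g x / (c * f x)))"
  defines "\<mu>t \<equiv> distr ((\<mu> \<Otimes>\<^sub>M \<mu>) \<Otimes>\<^sub>M uniform_measure lborel {0..(1::real)}) borel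
                   (\<lambda>((x, x'), u). if u \<le> \<alpha> x then x else x')"
  defines "ft \<equiv> (\<lambda>x. f x * (\<alpha> x + 1 - (\<integral>y. \<alpha> y \<partial>\<mu>)))"
  defines "pt \<equiv> (\<lambda>x. p x * (\<alpha> x + 1 - (\<integral>y. \<alpha> y \<partial>\<mu>)))"
  shows "\<mu>t = density lborel (\<lambda>x. ennreal (pt x))
         \<and> (\<forall>x. pt x = ft x / integral\<^sup>L lborel ft) \<and> integral\<^sup>L lborel ft = Zf
         \<and> KL \<mu>t \<nu> \<le> KL \<mu> \<nu>"
proof -
  have fm[measurable]: "f \<in> borel_measurable lborel" using f_int by (rule borel_measurable_integrable)
  have gm[measurable]: "g \<in> borel_measurable lborel" using g_int by (rule borel_measurable_integrable)
  have fb[measurable]: "f \<in> borel_measurable borel" using fm by simp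
  have gb[measurable]: "g \<in> borel_measurable borel" using gm by simp
  have pos_int: "0 < integral\<^sup>L lborel h" if hi: "integrable lborel h" and hp: "\<And>x. 0 < h x" for h :: "'a \<Rightarrow> real"
  proof -
    have "0 \<le> integral\<^sup>L lborel h" using hp by (simp add: less_imp_le)
    moreover have "integral\<^sup>L lborel h \<noteq> 0"
    proof
      assume "integral\<^sup>L lborel h = 0"
      then have "AE x in lborel. h x = 0"
        using integral_nonneg_eq_0_iff_AE[OF hi] hp by (simp add: less_imp_le)
      then have "emeasure lborel {x \<in> space lborel. \<not> h x = 0} = 0"
        by (intro emeasure_eq_0_AE) simp
      moreover have "{x \<in> space lborel. \<not> h x = 0} = UNIV" using hp by (auto simp: less_le)
      ultimately show False by simp
    qed
    ultimately show ?thesis by simp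
  qed
  have Zf0: "0 < Zf" unfolding Zf_def by (rule pos_int[OF f_int f_pos])
  have Zg0: "0 < Zg" unfolding Zg_def by (rule pos_int[OF g_int g_pos])
  have pm[measurable]: "p \<in> borel_measurable lborel" unfolding p_def by measurable
  have qm[measurable]: "q \<in> borel_measurable lborel" unfolding q_def by measurable
  have p0: "0 < p x" for x unfolding p_def using f_pos Zf0 by simp
  have q0: "0 < q x" for x unfolding q_def using g_pos Zg0 by simp
  have pi: "integrable lborel p" unfolding p_def using f_int by simp
  have qi: "integrable lborel q" unfolding q_def using g_int by simp
  have ip: "integral\<^sup>L lborel p = 1" unfolding p_def using Zf0 by (simp add: Zf_def)
  have iq: "integral\<^sup>L lborel q = 1" unfolding q_def using Zg0 by (simp add: Zg_def)
  have nnp: "(\<integral>\<^sup>+x. ennreal (p x) \<partial>lborel) = 1"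
    using nn_integral_eq_integral[OF pi] p0 ip by (simp add: less_imp_le)
  have nnq: "(\<integral>\<^sup>+x. ennreal (q x) \<partial>lborel) = 1"
    using nn_integral_eq_integral[OF qi] q0 iq by (simp add: less_imp_le)
  have psp: "prob_space \<mu>"
    by (rule prob_spaceI) (simp add: \<mu>_def emeasure_density nnp)
  have am[measurable]: "\<alpha> \<in> borel_measurable borel" unfolding \<alpha>_def by measurable
  have a0: "0 < \<alpha> x" for x unfolding \<alpha>_def using f_pos[of x] g_pos[of x] c_pos by simp
  have a1: "\<alpha> x \<le> 1" for x unfolding \<alpha>_def by simp
  define \<beta> where "\<beta> = (\<integral>y. \<alpha> y \<partial>\<mu>)"
  have part1: "\<mu>t = density lborel (\<lambda>x. ennreal (pt x))"
    unfolding \<mu>t_def pt_def \<mu>_def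
    by (rule mix_density) (use pm p0 psp a0 a1 in \<open>auto simp: \<mu>_def less_imp_le\<close>)
  have fai: "integrable lborel (\<lambda>x. f x * \<alpha> x)"
    by (rule Bochner_Integration.integrable_bound[OF f_int]) (measurable, use a0 a1 f_pos in \<open>auto simp: abs_mult less_imp_le intro!: AE_I2 mult_left_le\<close>)
  have pai: "integrable lborel (\<lambda>x. p x * \<alpha> x)" unfolding p_def using fai by (simp add: divide_simps)
  have b_eq: "\<beta> = integral\<^sup>L lborel (\<lambda>x. p x * \<alpha> x)"
    unfolding \<beta>_def \<mu>_def by (subst integral_density) (use pm p0 in \<open>auto simp: less_imp_le\<close>)
  have b_eq2: "integral\<^sup>L lborel (\<lambda>x. f x * \<alpha> x) = Zf * \<beta>"
    unfolding b_eq p_def using Zf0 by (simp add: divide_simps)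
  have b1: "\<beta> \<le> 1"
  proof -
    have "integral\<^sup>L lborel (\<lambda>x. p x * \<alpha> x) \<le> integral\<^sup>L lborel p"
      by (intro integral_mono pai pi) (use a1 p0 in \<open>auto intro: mult_left_le less_imp_le\<close>)
    then show ?thesis using ip b_eq by simp
  qed
  have b0: "0 < \<beta>" unfolding b_eq by (rule pos_int[OF pai]) (use p0 a0 in simp)
  have ft_eq: "ft = (\<lambda>x. f x * \<alpha> x + (1 - \<beta>) * f x)" unfolding ft_def \<beta>_def by (auto simp: algebra_simps)
  have part3: "integral\<^sup>L lborel ft = Zf"
    unfolding ft_eq using fai f_int b_eq2 by (simp add: Zf_def algebra_simps)
  have part2: "\<forall>x. pt x = ft x / integral\<^sup>L lborel ft"
    by (simp only: part3) (simp add: pt_def ft_def p_def)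
  define cc where "cc = c * Zf / Zg"
  have cc0: "0 < cc" unfolding cc_def using c_pos Zf0 Zg0 by simp
  define K where "K = 1 - ln \<beta> - ln cc"
  have ptm[measurable]: "pt \<in> borel_measurable lborel" unfolding pt_def by measurable
  have pt0: "0 \<le> pt x" for x unfolding pt_def \<beta>_def[symmetric] using p0[of x] a0[of x] b1 by (auto intro!: mult_nonneg_nonneg)
  have aeq: "\<alpha> x = min 1 (q x / (cc * p x))" for x
  proof -
    have "q x / (cc * p x) = g x / (c * f x)"
      unfolding q_def p_def cc_def using Zf0 Zg0 f_pos[of x] c_pos by (simp add: field_simps)
    then show ?thesis unfolding \<alpha>_def by simp
  qed
  have pw: "pt x * ln (pt x / q x) \<le> p x * ln (p x / q x) + p x * (\<alpha> x - \<beta>) * K" for x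
  proof -
    have e: "pt x = p x * (min 1 (q x / (cc * p x)) + 1 - \<beta>)"
      unfolding pt_def \<beta>_def[symmetric] aeq[of x] ..
    show ?thesis unfolding e K_def aeq[of x] by (rule pointwise_KL[OF p0 q0 cc0 b0 b1])
  qed
  have Hi: "integrable lborel (\<lambda>x. p x * (\<alpha> x - \<beta>) * K)"
  proof -
    have "(\<lambda>x. p x * (\<alpha> x - \<beta>) * K) = (\<lambda>x. K * (p x * \<alpha> x) - (K * \<beta>) * p x)"
      by (auto simp: algebra_simps)
    then show ?thesis using pai pi by simp
  qed
  have H0: "integral\<^sup>L lborel (\<lambda>x. p x * (\<alpha> x - \<beta>) * K) = 0"
  proof -
    have "(\<lambda>x. p x * (\<alpha> x - \<beta>) * K) = (\<lambda>x. K * (p x * \<alpha> x) - (K * \<beta>) * p x)"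
      by (auto simp: algebra_simps)
    then show ?thesis using pai pi ip b_eq by simp
  qed
  have Gneg: "(\<integral>\<^sup>+x. ennreal (- (p x * ln (p x / q x))) \<partial>lborel) < \<infinity>"
  proof -
    have "(\<integral>\<^sup>+x. ennreal (- (p x * ln (p x / q x))) \<partial>lborel) \<le> (\<integral>\<^sup>+x. ennreal (q x) \<partial>lborel)"
    proof (intro nn_integral_mono ennreal_leI)
      fix x
      have "ln (q x / p x) \<le> q x / p x - 1" using p0[of x] q0[of x] by (intro ln_le_minus_one) simp
      then have "p x * ln (q x / p x) \<le> p x * (q x / p x - 1)" using p0[of x] by (simp add: mult_left_mono)
      also have "\<dots> \<le> q x" using p0[of x] by (simp add: field_simps)
      finally show "- (p x * ln (p x / q x)) \<le> q x" using p0[of x] q0[of x] by (simp add: ln_div algebra_simps)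
    qed
    then have le1: "(\<integral>\<^sup>+x. ennreal (- (p x * ln (p x / q x))) \<partial>lborel) \<le> 1" using nnq by simp
    show ?thesis by (rule le_less_trans[OF le1]) simp
  qed
  have KLt: "KL \<mu>t \<nu> = enn2ereal (\<integral>\<^sup>+x. ennreal (pt x * ln (pt x / q x)) \<partial>lborel)
         - enn2ereal (\<integral>\<^sup>+x. ennreal (- (pt x * ln (pt x / q x))) \<partial>lborel)"
    unfolding part1 \<nu>_def by (rule KL_density_eq[OF ptm pt0 qm q0])
  have KL0: "KL \<mu> \<nu> = enn2ereal (\<integral>\<^sup>+x. ennreal (p x * ln (p x / q x)) \<partial>lborel)
         - enn2ereal (\<integral>\<^sup>+x. ennreal (- (p x * ln (p x / q x))) \<partial>lborel)"
    unfolding \<mu>_def \<nu>_def by (rule KL_density_eq[OF pm _ qm q0]) (use p0 in \<open>simp add: less_imp_le\<close>)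
  have part4: "KL \<mu>t \<nu> \<le> KL \<mu> \<nu>"
    unfolding KLt KL0
    by (rule int_ineq[OF _ _ Hi H0 pw Gneg]) measurable
  show ?thesis using part1 part2 part3 part4 by blast
qed

end
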